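(* Let $C=(C_{i,i'})_{1\le i,i'\le l}$ be a symmetric matrix. For all $m\in\mathbb Z_{\ge0}^l$, $$I_{C,m}(q,z)=\sum_{a\in\mathbb Z^l,\ 0\le a\le m}\frac{z^a q^{W_{C,a}}}{(q)_{m-a}}\,I_{C,a}(q,z),$$ where $0\le a\le m$ means $0\le a_i\le m_i$ for all $i$. Moreover, the solution of this recursion is unique once $I_{C,0}(q,z)=1$ is fixed.
   Context: Let $(q)_n=\prod_{k=1}^n(1-q^k)$ and, for $n\in\mathbb Z^l_{\ge0}$, $(q)_n=\prod_i(q)_{n_i}$; $z^a=\prod_i z_i^{a_i}$; $W_{C,a}=\frac12\big(\sum_{i,i'}C_{i,i'}a_ia_{i'}-\sum_iC_{i,i}a_i\big)$. Powers $q^{c}$ with $c$ a linear combination of entries of $C$ are treated as formal symbols with $q^aq^b=q^{a+b}$. For $m=(m_1,\dots,m_l)\in\mathbb Z^l_{\ge0}$ define the formal power series in $z=(z_1,\dots,z_l)$ $$I_{C,m}(q,z)=\sum_{\mathbf m}\prod_{i=1}^l z_i^{\sum_{t\ge0}t m_{i,t}}\frac{q^{Q_C(\mathbf m)}}{\prod_{i,t}(q)_{m_{i,t}}},$$ the sum over all tuples $\mathbf m=(m_{i,t})_{1\le i\le l,\ t\ge0}$ of nonnegative integers with $\sum_{t\ge0}m_{i,t}=m_i$ for each $i$, where $Q_C(\mathbf m)=\frac12\sum_{i,i'}\sum_{t,t'\ge0}C_{i,i'}\min(t,t')m_{i,t}m_{i',t'}-\frac12\sum_i\sum_{t\ge0}C_{i,i}\,t\,m_{i,t}$.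 *)

theory Defs
  imports Complex_Main
begin

text \<open>Index set {1..l} is modelled by a finite type 'n. Multi-indices are functions 'n => nat.
  A formal power series in z = (z_i) with real coefficients is represented by its coefficient
  function (('n => nat) => real): F N is the coefficient of z^N.\<close>

type_synonym 'n zseries = "('n \<Rightarrow> nat) \<Rightarrow> real"

definition qpoch :: "real \<Rightarrow> nat \<Rightarrow> real" where
  "qpoch q n = (\<Prod>k=1..n. 1 - q ^ k)"

definition qpochv :: "real \<Rightarrow> ('n::finite \<Rightarrow> nat) \<Rightarrow> real" where
  "qpochv q n = (\<Prod>i\<in>UNIV. qpoch q (n i))"

definition W :: "('n::finite \<Rightarrow> 'n \<Rightarrow> real) \<Rightarrow> ('n \<Rightarrow> nat) \<Rightarrow> real" where
  "W C a = ((\<Sum>i\<in>UNIV. \<Sum>i'\<in>UNIV. C i i' * real (a i) * real (a i'))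
            - (\<Sum>i\<in>UNIV. C i i * real (a i))) / 2"

definition supp_t :: "('n \<Rightarrow> nat \<Rightarrow> nat) \<Rightarrow> 'n \<Rightarrow> nat set" where
  "supp_t mm i = {t. mm i t \<noteq> 0}"

definition QC :: "('n::finite \<Rightarrow> 'n \<Rightarrow> real) \<Rightarrow> ('n \<Rightarrow> nat \<Rightarrow> nat) \<Rightarrow> real" where
  "QC C mm = ((\<Sum>i\<in>UNIV. \<Sum>i'\<in>UNIV. \<Sum>t\<in>supp_t mm i. \<Sum>t'\<in>supp_t mm i'.
                  C i i' * real (min t t') * real (mm i t) * real (mm i' t'))
             - (\<Sum>i\<in>UNIV. \<Sum>t\<in>supp_t mm i. C i i * real t * real (mm i t))) / 2"

text \<open>The tuples mm contributing to the coefficient of z^N in I_{C,m}: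
  sum_t m_{i,t} = m_i and sum_t t m_{i,t} = N_i. (The vanishing for t > N_i is implied
  by the second condition; it only makes the sums finite.)\<close>
definition tuples :: "('n::finite \<Rightarrow> nat) \<Rightarrow> ('n \<Rightarrow> nat) \<Rightarrow> ('n \<Rightarrow> nat \<Rightarrow> nat) set" where
  "tuples m N = {mm. (\<forall>i t. N i < t \<longrightarrow> mm i t = 0)
                     \<and> (\<forall>i. (\<Sum>t\<le>N i. mm i t) = m i)
                     \<and> (\<forall>i. (\<Sum>t\<le>N i. t * mm i t) = N i)}"

definition Iser :: "('n::finite \<Rightarrow> 'n \<Rightarrow> real) \<Rightarrow> real \<Rightarrow> ('n \<Rightarrow> nat) \<Rightarrow> 'n zseries" where
  "Iser C q m = (\<lambda>N. \<Sum>mm\<in>tuples m N.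
      q powr (QC C mm) / (\<Prod>i\<in>UNIV. \<Prod>t\<in>supp_t mm i. qpoch q (mm i t)))"

text \<open>Multiplication of a series by the monomial z^a.\<close>
definition zshift :: "('n \<Rightarrow> nat) \<Rightarrow> 'n zseries \<Rightarrow> 'n zseries" where
  "zshift a F = (\<lambda>N. if (\<forall>i. a i \<le> N i) then F (\<lambda>i. N i - a i) else 0)"

definition zone :: "'n zseries" where
  "zone = (\<lambda>N. if N = (\<lambda>_. 0) then 1 else 0)"

definition rec_rhs :: "('n::finite \<Rightarrow> 'n \<Rightarrow> real) \<Rightarrow> real \<Rightarrow> (('n \<Rightarrow> nat) \<Rightarrow> 'n zseries)
                       \<Rightarrow> ('n \<Rightarrow> nat) \<Rightarrow> 'n zseries" where
  "rec_rhs C q J m = (\<lambda>N. \<Sum>a\<in>{a. \<forall>i. a i \<le> m i}.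
      q powr (W C a) / qpochv q (\<lambda>i. m i - a i) * zshift a (J a) N)"

end

theory Submission
  imports Defs "HOL-Library.FuncSet"
begin

definition tup :: "('n::finite \<Rightarrow> nat) \<Rightarrow> ('n \<Rightarrow> nat) \<Rightarrow> nat \<Rightarrow> ('n \<Rightarrow> nat \<Rightarrow> nat) set" where
  "tup m N K = {mm. (\<forall>i t. K \<le> t \<longrightarrow> mm i t = 0) \<and> (\<forall>i. (\<Sum>t<K. mm i t) = m i)
                   \<and> (\<forall>i. (\<Sum>t<K. t * mm i t) = N i)}"

definition hterm :: "('n::finite \<Rightarrow> 'n \<Rightarrow> real) \<Rightarrow> real \<Rightarrow> ('n \<Rightarrow> nat \<Rightarrow> nat) \<Rightarrow> real" where
  "hterm C q mm = q powr (QC C mm) / (\<Prod>i\<in>UNIV. \<Prod>t\<in>supp_t mm i. qpoch q (mm i t))"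

lemma sum_ext_lt:
  fixes f :: "nat \<Rightarrow> 'a::comm_monoid_add"
  assumes "\<forall>t>n. f t = 0" "n < K"
  shows "(\<Sum>t<K. f t) = (\<Sum>t\<le>n. f t)"
  using assms by (intro sum.mono_neutral_right) auto

lemma tuples_eq:
  assumes NK: "\<forall>i. N i < K"
  shows "tuples m N = tup m N K"
proof (intro set_eqI iffI)
  fix mm assume "mm \<in> tuples m N"
  then have v: "\<forall>i t. N i < t \<longrightarrow> mm i t = 0" and s1: "\<forall>i. (\<Sum>t\<le>N i. mm i t) = m i"
    and s2: "\<forall>i. (\<Sum>t\<le>N i. t*mm i t) = N i" by (auto simp: tuples_def)
  have "(\<Sum>t<K. mm i t) = (\<Sum>t\<le>N i. mm i t)" for i using v NK by (intro sum_ext_lt) auto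
  moreover have "(\<Sum>t<K. t*mm i t) = (\<Sum>t\<le>N i. t*mm i t)" for i using v NK by (intro sum_ext_lt) auto
  moreover have "K \<le> t \<Longrightarrow> mm i t = 0" for i t using v NK[rule_format, of i] by auto
  ultimately show "mm \<in> tup m N K" using s1 s2 by (auto simp: tup_def)
next
  fix mm assume "mm \<in> tup m N K"
  then have v: "\<forall>i t. K \<le> t \<longrightarrow> mm i t = 0" and s1: "\<forall>i. (\<Sum>t<K. mm i t) = m i"
    and s2: "\<forall>i. (\<Sum>t<K. t*mm i t) = N i" by (auto simp: tup_def)
  have v2: "mm i t = 0" if "N i < t" for i t
  proof (rule ccontr)
    assume ne: "mm i t \<noteq> 0"
    with v have "t < K" by (meson not_le)
    hence "t * mm i t \<le> (\<Sum>t<K. t*mm i t)" by (intro member_le_sum) auto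
    also have "\<dots> = N i" using s2 by simp
    finally have "t * mm i t \<le> N i" .
    moreover have "t \<le> t * mm i t" using ne by simp
    ultimately show False using that by linarith
  qed
  have "(\<Sum>t<K. mm i t) = (\<Sum>t\<le>N i. mm i t)" for i using v2 NK by (intro sum_ext_lt) auto
  moreover have "(\<Sum>t<K. t*mm i t) = (\<Sum>t\<le>N i. t*mm i t)" for i using v2 NK by (intro sum_ext_lt) auto
  ultimately show "mm \<in> tuples m N" using s1 s2 v2 by (auto simp: tuples_def)
qed

lemma finite_tup: "finite (tup m N K)"
proof -
  define \<phi> where "\<phi> g = (\<lambda>i t. if t < K then g i t else 0)" for g :: "'a \<Rightarrow> nat \<Rightarrow> nat"
  have "tup m N K \<subseteq> \<phi> ` (\<Pi>\<^sub>E i\<in>UNIV. \<Pi>\<^sub>E t\<in>{..<K}. {..m i})"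
  proof
    fix mm assume mm: "mm \<in> tup m N K"
    then have v: "\<forall>i t. K \<le> t \<longrightarrow> mm i t = 0" and s1: "\<forall>i. (\<Sum>t<K. mm i t) = m i"
      by (auto simp: tup_def)
    have le: "mm i t \<le> m i" if "t < K" for i t
    proof -
      have "mm i t \<le> (\<Sum>t<K. mm i t)" using that by (intro member_le_sum) auto
      then show ?thesis using s1 by simp
    qed
    have "mm = \<phi> (\<lambda>i. restrict (mm i) {..<K})"
      using v by (auto simp: \<phi>_def fun_eq_iff not_less)
    moreover have "(\<lambda>i. restrict (mm i) {..<K}) \<in> (\<Pi>\<^sub>E i\<in>UNIV. \<Pi>\<^sub>E t\<in>{..<K}. {..m i})"
      using le by (auto simp: PiE_UNIV_domain)
    ultimately show "mm \<in> \<phi> ` (\<Pi>\<^sub>E i\<in>UNIV. \<Pi>\<^sub>E t\<in>{..<K}. {..m i})" by blast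
  qed
  moreover have "finite (\<Pi>\<^sub>E i\<in>UNIV. \<Pi>\<^sub>E t\<in>{..<K}. {..m i})"
    by (intro finite_PiE) auto
  ultimately show ?thesis by (meson finite_imageI finite_subset)
qed

lemma finite_le: "finite {a::'n::finite \<Rightarrow> nat. \<forall>i. a i \<le> m i}"
proof -
  have "{a::'n \<Rightarrow> nat. \<forall>i. a i \<le> m i} = (\<Pi>\<^sub>E i\<in>UNIV. {..m i})"
    by (auto simp: PiE_UNIV_domain)
  then show ?thesis by (simp add: finite_PiE)
qed


lemma supp_sum:
  fixes g :: "nat \<Rightarrow> real"
  assumes "\<forall>t. K \<le> t \<longrightarrow> mm i t = 0" "\<And>t. mm i t = 0 \<Longrightarrow> g t = 0"
  shows "(\<Sum>t\<in>supp_t mm i. g t) = (\<Sum>t<K. g t)"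
proof -
  have "supp_t mm i \<subseteq> {..<K}" using assms(1) by (auto simp: supp_t_def not_less[symmetric])
  then show ?thesis using assms(2) by (intro sum.mono_neutral_left) (auto simp: supp_t_def)
qed

lemma supp_prod:
  fixes g :: "nat \<Rightarrow> real"
  assumes "\<forall>t. K \<le> t \<longrightarrow> mm i t = 0" "\<And>t. mm i t = 0 \<Longrightarrow> g t = 1"
  shows "(\<Prod>t\<in>supp_t mm i. g t) = (\<Prod>t<K. g t)"
proof -
  have "supp_t mm i \<subseteq> {..<K}" using assms(1) by (auto simp: supp_t_def not_less[symmetric])
  then show ?thesis using assms(2) by (intro prod.mono_neutral_left) (auto simp: supp_t_def)
qed

definition Q2 :: "('n::finite \<Rightarrow> 'n \<Rightarrow> real) \<Rightarrow> ('n \<Rightarrow> nat \<Rightarrow> nat) \<Rightarrow> nat \<Rightarrow> real" where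
  "Q2 C mm K = (\<Sum>i\<in>UNIV. \<Sum>i'\<in>UNIV. C i i' *
      (\<Sum>t<K. \<Sum>t'<K. real (min t t') * real (mm i t) * real (mm i' t')))"

definition Q1 :: "('n::finite \<Rightarrow> 'n \<Rightarrow> real) \<Rightarrow> ('n \<Rightarrow> nat \<Rightarrow> nat) \<Rightarrow> nat \<Rightarrow> real" where
  "Q1 C mm K = (\<Sum>i\<in>UNIV. C i i * (\<Sum>t<K. real t * real (mm i t)))"

lemma QC_eq:
  assumes v: "\<forall>i t. K \<le> t \<longrightarrow> mm i t = 0"
  shows "QC C mm = (Q2 C mm K - Q1 C mm K) / 2"
proof -
  have a: "(\<Sum>t\<in>supp_t mm i. \<Sum>t'\<in>supp_t mm i'. C i i' * real (min t t') * real (mm i t) * real (mm i' t'))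
     = C i i' * (\<Sum>t<K. \<Sum>t'<K. real (min t t') * real (mm i t) * real (mm i' t'))" for i i'
  proof -
    have "(\<Sum>t\<in>supp_t mm i. \<Sum>t'\<in>supp_t mm i'. C i i' * real (min t t') * real (mm i t) * real (mm i' t'))
       = (\<Sum>t\<in>supp_t mm i. \<Sum>t'<K. C i i' * real (min t t') * real (mm i t) * real (mm i' t'))"
      by (intro sum.cong refl supp_sum) (use v in auto)
    also have "\<dots> = (\<Sum>t<K. \<Sum>t'<K. C i i' * real (min t t') * real (mm i t) * real (mm i' t'))"
      by (intro supp_sum) (use v in auto)
    finally show ?thesis by (simp add: sum_distrib_left mult.assoc)
  qed
  have b: "(\<Sum>t\<in>supp_t mm i. C i i * real t * real (mm i t)) = C i i * (\<Sum>t<K. real t * real (mm i t))" for i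
  proof -
    have "(\<Sum>t\<in>supp_t mm i. C i i * real t * real (mm i t)) = (\<Sum>t<K. C i i * real t * real (mm i t))"
      by (intro supp_sum) (use v in auto)
    then show ?thesis by (simp add: sum_distrib_left mult.assoc)
  qed
  show ?thesis unfolding QC_def Q2_def Q1_def using a b by simp
qed

lemma prod_eq:
  assumes v: "\<forall>i t. K \<le> t \<longrightarrow> mm i t = 0"
  shows "(\<Prod>i\<in>UNIV. \<Prod>t\<in>supp_t mm i. qpoch q (mm i t)) = (\<Prod>i\<in>UNIV. \<Prod>t<K. qpoch q (mm i t))"
  by (intro prod.cong refl supp_prod) (use v in \<open>auto simp: qpoch_def\<close>)

lemma shift2:
  fixes f g :: "nat \<Rightarrow> nat"
  shows "(\<Sum>t<Suc K. \<Sum>t'<Suc K. real (min t t') * real (f t) * real (g t'))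
   = (\<Sum>s<K. \<Sum>s'<K. real (min s s') * real (f (Suc s)) * real (g (Suc s')))
     + (\<Sum>s<K. real (f (Suc s))) * (\<Sum>s'<K. real (g (Suc s')))"
proof -
  have "(\<Sum>t<Suc K. \<Sum>t'<Suc K. real (min t t') * real (f t) * real (g t'))
      = (\<Sum>s<K. \<Sum>s'<K. (real (min s s') + 1) * real (f (Suc s)) * real (g (Suc s')))"
    unfolding sum.lessThan_Suc_shift by (simp del: lessThan_Suc add: add.commute)
  also have "\<dots> = (\<Sum>s<K. \<Sum>s'<K. real (min s s') * real (f (Suc s)) * real (g (Suc s'))
        + real (f (Suc s)) * real (g (Suc s')))"
    by (simp add: algebra_simps)
  also have "\<dots> = (\<Sum>s<K. \<Sum>s'<K. real (min s s') * real (f (Suc s)) * real (g (Suc s')))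
     + (\<Sum>s<K. real (f (Suc s))) * (\<Sum>s'<K. real (g (Suc s')))"
    by (simp add: sum.distrib sum_distrib_left sum_distrib_right) (rule sum.swap)
  finally show ?thesis .
qed

lemma shift1:
  fixes f :: "nat \<Rightarrow> nat"
  shows "(\<Sum>t<Suc K. real t * real (f t))
   = (\<Sum>s<K. real s * real (f (Suc s))) + (\<Sum>s<K. real (f (Suc s)))"
  unfolding sum.lessThan_Suc_shift by (simp del: lessThan_Suc add: sum.distrib algebra_simps)


lemma tail_props:
  assumes mm: "mm \<in> tup m N (Suc K)"
  defines "a \<equiv> \<lambda>i. m i - mm i 0"
  shows "mm i 0 \<le> m i" "a i = (\<Sum>s<K. mm i (Suc s))" "a i \<le> N i"
    "(\<lambda>i s. mm i (Suc s)) \<in> tup a (\<lambda>i. N i - a i) K"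
proof -
  have v: "\<forall>i t. Suc K \<le> t \<longrightarrow> mm i t = 0" and s1: "\<forall>i. (\<Sum>t<Suc K. mm i t) = m i"
    and s2: "\<forall>i. (\<Sum>t<Suc K. t*mm i t) = N i" using mm by (auto simp: tup_def)
  have e1: "mm i 0 + (\<Sum>s<K. mm i (Suc s)) = m i" for i
    using s1 unfolding sum.lessThan_Suc_shift by simp
  have e2: "(\<Sum>s<K. mm i (Suc s)) + (\<Sum>s<K. s * mm i (Suc s)) = N i" for i
    using s2[rule_format, of i] unfolding sum.lessThan_Suc_shift by (simp add: sum.distrib)
  show "mm i 0 \<le> m i" using e1[of i] by linarith
  show ai: "a i = (\<Sum>s<K. mm i (Suc s))" for i using e1[of i] unfolding a_def by linarith
  show "a i \<le> N i" using e2[of i] ai[of i] by linarith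
  show "(\<lambda>i s. mm i (Suc s)) \<in> tup a (\<lambda>i. N i - a i) K"
    unfolding tup_def using v ai e2
    by (auto) (metis add_diff_cancel_left')
qed

lemma pointwise:
  assumes mm: "mm \<in> tup m N (Suc K)"
  defines "a \<equiv> \<lambda>i. m i - mm i 0"
  shows "hterm C q mm = q powr W C a / qpochv q (\<lambda>i. m i - a i) * hterm C q (\<lambda>i s. mm i (Suc s))"
proof -
  define tl where "tl = (\<lambda>i s. mm i (Suc s))"
  have v: "\<forall>i t. Suc K \<le> t \<longrightarrow> mm i t = 0" using mm by (auto simp: tup_def)
  have vt: "\<forall>i t. K \<le> t \<longrightarrow> tl i t = 0" using v by (auto simp: tl_def)
  have ai: "real (a i) = (\<Sum>s<K. real (tl i s))" for i
    using tail_props(2)[OF mm, of i] unfolding a_def tl_def by simp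
  have ma: "m i - a i = mm i 0" for i using tail_props(1)[OF mm, of i] unfolding a_def by simp
  have q2: "Q2 C mm (Suc K) = Q2 C tl K + (\<Sum>i\<in>UNIV. \<Sum>i'\<in>UNIV. C i i' * real (a i) * real (a i'))"
    unfolding Q2_def shift2 ai
    by (simp add: tl_def distrib_left sum.distrib mult.assoc)
  have q1: "Q1 C mm (Suc K) = Q1 C tl K + (\<Sum>i\<in>UNIV. C i i * real (a i))"
    unfolding Q1_def shift1 ai
    by (simp add: tl_def distrib_left sum.distrib)
  have qc: "QC C mm = W C a + QC C tl"
    unfolding QC_eq[OF v] QC_eq[OF vt] q2 q1 W_def
    by (simp add: mult.assoc field_simps)
  have pr: "(\<Prod>i\<in>UNIV. \<Prod>t\<in>supp_t mm i. qpoch q (mm i t))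
      = qpochv q (\<lambda>i. m i - a i) * (\<Prod>i\<in>UNIV. \<Prod>t\<in>supp_t tl i. qpoch q (tl i t))"
    unfolding prod_eq[OF v] prod_eq[OF vt] qpochv_def ma
    unfolding prod.lessThan_Suc_shift by (simp add: tl_def prod.distrib)
  show ?thesis unfolding hterm_def qc pr powr_add tl_def[symmetric]
    by (simp add: times_divide_times_eq)
qed


lemma rec_holds:
  fixes C :: "'n::finite \<Rightarrow> 'n \<Rightarrow> real"
  shows "Iser C q m N = rec_rhs C q (Iser C q) m N"
proof -
  define K where "K = Suc (\<Sum>i\<in>UNIV. N i)"
  have NK: "N i < K" for i
  proof -
    have "N i \<le> (\<Sum>i\<in>UNIV. N i)" by (intro member_le_sum) auto
    then show ?thesis unfolding K_def by simp
  qed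
  define T where "T = tup m N (Suc K)"
  have Teq: "tuples m N = T" unfolding T_def using NK by (intro tuples_eq) (auto simp: less_Suc_eq)
  define A where "A = {a::'n\<Rightarrow>nat. \<forall>i. a i \<le> m i}"
  define sh where "sh mm = (\<lambda>i. m i - mm i 0)" for mm :: "'n \<Rightarrow> nat \<Rightarrow> nat"
  have "Iser C q m N = sum (hterm C q) T" by (simp add: Iser_def Teq hterm_def)
  also have "\<dots> = (\<Sum>a\<in>A. sum (hterm C q) {mm\<in>T. sh mm = a})"
    by (rule sum.group[symmetric]) (auto simp: T_def A_def sh_def finite_tup finite_le)
  also have "\<dots> = (\<Sum>a\<in>A. q powr W C a / qpochv q (\<lambda>i. m i - a i) * zshift a (Iser C q a) N)"
  proof (rule sum.cong[OF refl])
    fix a assume aA: "a \<in> A"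
    show "sum (hterm C q) {mm\<in>T. sh mm = a}
        = q powr W C a / qpochv q (\<lambda>i. m i - a i) * zshift a (Iser C q a) N"
    proof (cases "\<forall>i. a i \<le> N i")
      case False
      have e: "{mm\<in>T. sh mm = a} = {}"
        using False tail_props(3) unfolding T_def sh_def by blast
      have "zshift a (Iser C q a) N = 0" using False unfolding zshift_def by presburger
      then show ?thesis unfolding e by simp
    next
      case True
      have NK2: "\<forall>i. N i - a i < K" using NK by (meson le_less_trans diff_le_self)
      have "zshift a (Iser C q a) N = sum (hterm C q) (tup a (\<lambda>i. N i - a i) K)"
        using True by (simp add: zshift_def Iser_def hterm_def tuples_eq[OF NK2])
      moreover have "sum (hterm C q) {mm\<in>T. sh mm = a}
          = (\<Sum>mm'\<in>tup a (\<lambda>i. N i - a i) K. q powr W C a / qpochv q (\<lambda>i. m i - a i) * hterm C q mm')"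
      proof (rule sum.reindex_bij_witness[where j = "\<lambda>mm i s. mm i (Suc s)"
            and i = "\<lambda>mm' i t. case t of 0 \<Rightarrow> m i - a i | Suc s \<Rightarrow> mm' i s"])
        fix mm assume "mm \<in> {mm\<in>T. sh mm = a}"
        then have mm: "mm \<in> tup m N (Suc K)" and sa: "(\<lambda>i. m i - mm i 0) = a"
          by (auto simp: T_def sh_def)
        show "(\<lambda>i t. case t of 0 \<Rightarrow> m i - a i | Suc s \<Rightarrow> mm i (Suc s)) = mm"
          using tail_props(1)[OF mm] sa[symmetric]
          by (auto simp: fun_eq_iff split: nat.split)
        show "(\<lambda>i s. mm i (Suc s)) \<in> tup a (\<lambda>i. N i - a i) K"
        proof -
          have "\<And>i. m i - mm i 0 = a i" using sa by (auto simp: fun_eq_iff)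
          then show ?thesis using tail_props(4)[OF mm] by simp
        qed
        show "q powr W C a / qpochv q (\<lambda>i. m i - a i) * hterm C q (\<lambda>i s. mm i (Suc s)) = hterm C q mm"
        proof -
          have "\<And>i. m i - mm i 0 = a i" using sa by (auto simp: fun_eq_iff)
          then show ?thesis using pointwise[OF mm, of C q] by simp
        qed
      next
        fix mm' assume mm': "mm' \<in> tup a (\<lambda>i. N i - a i) K"
        then have v: "\<forall>i t. K \<le> t \<longrightarrow> mm' i t = 0" and s1: "\<forall>i. (\<Sum>t<K. mm' i t) = a i"
          and s2: "\<forall>i. (\<Sum>t<K. t*mm' i t) = N i - a i" by (auto simp: tup_def)
        show "(\<lambda>i s. (case Suc s of 0 \<Rightarrow> m i - a i | Suc s \<Rightarrow> mm' i s)) = mm'" by simp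
        have am: "a i \<le> m i" for i using aA by (auto simp: A_def)
        have "(\<lambda>i t. case t of 0 \<Rightarrow> m i - a i | Suc s \<Rightarrow> mm' i s) \<in> tup m N (Suc K)"
          unfolding tup_def
        proof (intro CollectI conjI allI impI)
          fix i t assume "Suc K \<le> t"
          then show "(case t of 0 \<Rightarrow> m i - a i | Suc s \<Rightarrow> mm' i s) = 0"
            using v by (cases t) auto
        next
          fix i
          show "(\<Sum>t<Suc K. case t of 0 \<Rightarrow> m i - a i | Suc s \<Rightarrow> mm' i s) = m i"
            unfolding sum.lessThan_Suc_shift using s1 am[of i] by simp
          have "(\<Sum>t<Suc K. t * (case t of 0 \<Rightarrow> m i - a i | Suc s \<Rightarrow> mm' i s))
              = (\<Sum>s<K. mm' i s) + (\<Sum>s<K. s * mm' i s)"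
            unfolding sum.lessThan_Suc_shift by (simp add: sum.distrib)
          also have "\<dots> = N i" using s1 s2 True by simp
          finally show "(\<Sum>t<Suc K. t * (case t of 0 \<Rightarrow> m i - a i | Suc s \<Rightarrow> mm' i s)) = N i" .
        qed
        moreover have "sh (\<lambda>i t. case t of 0 \<Rightarrow> m i - a i | Suc s \<Rightarrow> mm' i s) = a"
          using am by (auto simp: sh_def fun_eq_iff)
        ultimately show "(\<lambda>i t. case t of 0 \<Rightarrow> m i - a i | Suc s \<Rightarrow> mm' i s) \<in> {mm\<in>T. sh mm = a}"
          by (simp add: T_def)
      qed
      ultimately show ?thesis by (simp add: sum_distrib_left)
    qed
  qed
  also have "\<dots> = rec_rhs C q (Iser C q) m N" by (simp add: rec_rhs_def A_def)
  finally show ?thesis .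
qed


theorem proposition2p4:
  fixes C :: "'n::finite \<Rightarrow> 'n \<Rightarrow> real" and q :: real
  assumes symm: "\<And>i i'. C i i' = C i' i"
    and q: "0 < q" "q < 1"
  shows "(\<forall>m. Iser C q m = rec_rhs C q (Iser C q) m)
         \<and> Iser C q (\<lambda>_. 0) = zone
         \<and> (\<forall>J. J (\<lambda>_. 0) = zone \<and> (\<forall>m. J m = rec_rhs C q J m) \<longrightarrow> J = Iser C q)"
proof (intro conjI allI impI)
  show rec: "Iser C q m = rec_rhs C q (Iser C q) m" for m
    using rec_holds[of C q m] by (auto simp: fun_eq_iff)
  show I0: "Iser C q (\<lambda>_. 0) = zone"
  proof
    fix N :: "'n \<Rightarrow> nat"
    have t: "tuples (\<lambda>_. 0) N = (if N = (\<lambda>_. 0) then {\<lambda>_ _. 0} else {})"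
    proof (cases "N = (\<lambda>_. 0)")
      case True
      then show ?thesis by (auto simp: tuples_def fun_eq_iff) (metis not_gr0)
    next
      case False
      then obtain i where "N i \<noteq> 0" by auto
      then show ?thesis using False by (auto simp: tuples_def)
    qed
    show "Iser C q (\<lambda>_. 0) N = zone N"
      using q by (simp add: Iser_def t zone_def QC_def supp_t_def)
  qed
  fix J assume J: "J (\<lambda>_. 0) = zone \<and> (\<forall>m. J m = rec_rhs C q J m)"
  have "J m N = Iser C q m N" for m N
  proof (induction "sum N UNIV" arbitrary: N m rule: less_induct)
    case less
    have "J m N = rec_rhs C q J m N" using J by metis
    also have "\<dots> = rec_rhs C q (Iser C q) m N"
      unfolding rec_rhs_def
    proof (intro sum.cong refl arg_cong2[where f = "(*)"])
      fix a :: "'n \<Rightarrow> nat"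
      show "zshift a (J a) N = zshift a (Iser C q a) N"
      proof (cases "a = (\<lambda>_. 0)")
        case True
        then show ?thesis using J I0 by simp
      next
        case False
        show ?thesis
        proof (cases "\<forall>i. a i \<le> N i")
          case True
          obtain i where "a i \<noteq> 0" using False by auto
          have "sum (\<lambda>i. N i - a i) UNIV < sum N UNIV"
            by (rule sum_strict_mono_ex1) (use True[rule_format, of i] \<open>a i \<noteq> 0\<close> in \<open>auto intro!: exI[of _ i]\<close>)
          then show ?thesis using True less by (simp add: zshift_def)
        qed (unfold zshift_def, presburger)
      qed
    qed
    also have "\<dots> = Iser C q m N" using rec[of m] by simp
    finally show ?case .
  qed
  then show "J = Iser C q" by (auto simp: fun_eq_iff)
qed

end
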